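(* Let $(X,d,m)$ be $D$-Ahlfors regular, fix $o\in X$ and set $d(x)=1+d(o,x)$. For every $a\in(0,1]$ there exists $C_a\in(0,\infty)$ such that, for every $t\in(0,1/2]$ and every nonnegative $g\in L^1_{\mathrm{loc}}(X)$, there is a finite collection $\{x_j\}_j$ of points of $X$ such that: $t\,d(x_j)\le1$ for all $j$; $\sum_j\mathbf 1_{B(x_j,td(x_j))}(x)\le C_a$ for all $x\in X$; $\sum_j\mathbf 1_{B(x_j,atd(x_j))}(x)\ge1$ whenever $t\,d(x)\le1/2$; and $g(x_j)\le C_a\,m(B(x_j,td(x_j)))^{-1}\int_{B(x_j,td(x_j))}g\,dm$ for all $j$.
   Context: $(X,d,m)$ is $D$-Ahlfors regular ($D>0$) if there is $A\ge1$ with $A^{-1}r^D\le m(B(x,r))\le Ar^D$ for all $x\in X$, $r\ge0$, where $B(x,r)$ is the metric ball. *)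

theory Defs
  imports "HOL-Analysis.Analysis"
begin

text \<open>A metric measure space is modelled by a type of class metric_space together
with a measure m on its Borel sets with space m = UNIV.\<close>

definition ahlfors_regular :: "'a::metric_space measure \<Rightarrow> real \<Rightarrow> bool" where
  "ahlfors_regular m D \<longleftrightarrow>
     (\<exists>A::real. A \<ge> 1 \<and> (\<forall>x r. r \<ge> 0 \<longrightarrow>
        ennreal ((1 / A) * r powr D) \<le> emeasure m (ball x r) \<and>
        emeasure m (ball x r) \<le> ennreal (A * r powr D)))"

definition loc_integrable :: "'a::metric_space measure \<Rightarrow> ('a \<Rightarrow> real) \<Rightarrow> bool" where
  "loc_integrable m g \<longleftrightarrow> g \<in> borel_measurable m \<and>
     (\<forall>x r. set_integrable m (ball x r) g)"

end

theory Submission imports Defs begin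

lemma AR_obtain:
  fixes m :: "'a::metric_space measure"
  assumes "ahlfors_regular m D"
  obtains A where "A \<ge> 1"
    "\<And>x r. r \<ge> 0 \<Longrightarrow> emeasure m (ball x r) \<noteq> \<infinity>"
    "\<And>x r. r \<ge> 0 \<Longrightarrow> (1/A) * r powr D \<le> measure m (ball x r)"
    "\<And>x r. r \<ge> 0 \<Longrightarrow> measure m (ball x r) \<le> A * r powr D"
proof -
  obtain A where A: "A \<ge> 1" "\<And>x r. r \<ge> 0 \<Longrightarrow> ennreal ((1 / A) * r powr D) \<le> emeasure m (ball x r) \<and>
        emeasure m (ball x r) \<le> ennreal (A * r powr D)"
    using assms unfolding ahlfors_regular_def by blast
  have fin: "emeasure m (ball x r) \<noteq> \<infinity>" if "r \<ge> 0" for x r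
    using A(2)[OF that, of x] by (metis ennreal_less_top infinity_ennreal_def linorder_not_le top.not_eq_extremum)
  have eq: "emeasure m (ball x r) = ennreal (measure m (ball x r))" if "r \<ge> 0" for x r
    using fin[OF that] emeasure_eq_ennreal_measure by auto
  show ?thesis
  proof (rule that[OF A(1) fin])
    fix x r :: _ assume r: "(r::real) \<ge> 0"
    have "ennreal ((1 / A) * r powr D) \<le> ennreal (measure m (ball x r))"
      using A(2)[OF r, of x] eq[OF r, of x] by simp
    then show "(1/A) * r powr D \<le> measure m (ball x r)"
      by (simp add: ennreal_le_iff)
    have "ennreal (measure m (ball x r)) \<le> ennreal (A * r powr D)"
      using A(2)[OF r, of x] eq[OF r, of x] by simp
    then show "measure m (ball x r) \<le> A * r powr D"
      using A(1) by (subst (asm) ennreal_le_iff) auto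
  qed
qed

lemma packing:
  fixes m :: "'a::metric_space measure" and P :: "'a set"
  assumes sets: "sets m = sets borel" and A: "A \<ge> 1"
    and fin: "\<And>x r. r \<ge> 0 \<Longrightarrow> emeasure m (ball x r) \<noteq> \<infinity>"
    and lo: "\<And>x r. r \<ge> 0 \<Longrightarrow> (1/A) * r powr D \<le> measure m (ball x r)"
    and up: "\<And>x r. r \<ge> 0 \<Longrightarrow> measure m (ball x r) \<le> A * r powr D"
    and P: "finite P" and r: "r > 0" and R: "R \<ge> 0"
    and sub: "\<And>p. p \<in> P \<Longrightarrow> ball p r \<subseteq> ball c R"
    and sep: "\<And>p q. p \<in> P \<Longrightarrow> q \<in> P \<Longrightarrow> p \<noteq> q \<Longrightarrow> 2 * r \<le> dist p q"
  shows "real (card P) * ((1/A) * r powr D) \<le> A * R powr D"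
proof -
  have bs: "ball x s \<in> sets m" for x s using sets by simp
  have disj: "disjoint_family_on (\<lambda>p. ball p r) P"
    unfolding disjoint_family_on_def
  proof (intro ballI impI)
    fix p q assume "p \<in> P" "q \<in> P" "p \<noteq> q"
    then have "2 * r \<le> dist p q" by (rule sep)
    then show "ball p r \<inter> ball q r = {}"
    proof (rule contrapos_pp)
      assume "ball p r \<inter> ball q r \<noteq> {}"
      then obtain y where "dist p y < r" "dist q y < r" by auto
      then have "dist p q < 2 * r" using dist_triangle[of p q y] dist_commute[of q y] by linarith
      then show "\<not> 2 * r \<le> dist p q" by linarith
    qed
  qed
  have "measure m (\<Union>p\<in>P. ball p r) = (\<Sum>p\<in>P. measure m (ball p r))"
    using r by (intro measure_finite_Union[OF P _ disj]) (use r fin in \<open>auto simp: bs infinity_ennreal_def\<close>)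
  also have "\<dots> \<ge> (\<Sum>p\<in>P. (1/A) * r powr D)"
    using r by (intro sum_mono lo) auto
  finally have "real (card P) * ((1/A) * r powr D) \<le> measure m (\<Union>p\<in>P. ball p r)" by simp
  also have "\<dots> \<le> measure m (ball c R)"
  proof (rule measure_mono_fmeasurable)
    show "(\<Union>p\<in>P. ball p r) \<subseteq> ball c R" using sub by auto
    show "(\<Union>p\<in>P. ball p r) \<in> sets m" using sets by (simp add: borel_open open_UN)
    show "ball c R \<in> fmeasurable m" using fin[OF R, of c] bs
      by (simp add: fmeasurable_def less_top[symmetric] infinity_ennreal_def)
  qed
  also have "\<dots> \<le> A * R powr D" using up R by auto
  finally show ?thesis .
qed

lemma below_avg:
  fixes m :: "'a measure" and g :: "'a \<Rightarrow> real"
  assumes gi: "set_integrable m B g" and B: "B \<in> sets m" and fin: "emeasure m B \<noteq> \<infinity>"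
    and pos: "measure m B > 0"
  shows "\<exists>y\<in>B. g y * measure m B \<le> (LINT y:B|m. g y)"
proof (rule ccontr)
  assume "\<not> ?thesis"
  then have gt: "\<And>y. y \<in> B \<Longrightarrow> (LINT y:B|m. g y) < g y * measure m B" by auto
  define c where "c = (LINT y:B|m. g y) / measure m B"
  have cg: "c < g y" if "y \<in> B" for y
    using gt[OF that] pos by (simp add: c_def divide_less_eq)
  have fin': "emeasure m B < \<infinity>" by (metis fin infinity_ennreal_def less_top)
  have ci: "set_integrable m B (\<lambda>_. c)"
    using B fin unfolding set_integrable_def
    using integrable_real_indicator[OF B fin'] integrable_mult_left[of c m "indicator B"] by (simp add: mult.commute)
  have di: "set_integrable m B (\<lambda>y. g y - c)" using gi ci by auto
  have "(LINT y:B|m. g y - c) = (LINT y:B|m. g y) - (LINT y:B|m. c)"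
    using gi ci by (rule set_integral_diff(2))
  also have "(LINT y:B|m. c) = measure m B * c" using set_integral_const[OF B fin, of c] by simp
  finally have "(LINT y:B|m. g y - c) = 0" using pos by (simp add: c_def)
  then have "integral\<^sup>L m (\<lambda>y. indicator B y *\<^sub>R (g y - c)) = 0"
    by (simp add: set_lebesgue_integral_def)
  moreover have "AE y in m. 0 \<le> indicator B y *\<^sub>R (g y - c)"
    using cg by (auto simp: indicator_def less_imp_le)
  ultimately have "AE y in m. indicator B y *\<^sub>R (g y - c) = 0"
    using integral_nonneg_eq_0_iff_AE di unfolding set_integrable_def by blast
  then have "AE y in m. y \<notin> B"
    by eventually_elim (use cg in \<open>fastforce simp: indicator_def\<close>)
  then have "B \<in> null_sets m" using AE_iff_null_sets B by blast
  then show False using pos by (simp add: null_sets_def measure_def)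
qed

lemma set_int_mono_set:
  fixes g :: "'a \<Rightarrow> real"
  assumes "set_integrable m B1 g" "set_integrable m B2 g" "B1 \<subseteq> B2" "\<And>x. 0 \<le> g x"
  shows "(LINT y:B1|m. g y) \<le> (LINT y:B2|m. g y)"
  using assms unfolding set_lebesgue_integral_def set_integrable_def
  by (intro integral_mono) (auto simp: indicator_def)

lemma card_bound:
  fixes c A r R D :: real
  assumes "A > 0" "r > 0" "R \<ge> 0" "c * ((1/A) * r powr D) \<le> A * R powr D"
  shows "c \<le> A * A * (R / r) powr D"
proof -
  have rp: "r powr D > 0" using assms by simp
  have "c * r powr D \<le> A * A * R powr D" using assms(1,4)
    by (simp add: field_simps)
  then have "c \<le> A * A * R powr D / r powr D" using rp by (simp add: field_simps)
  then show ?thesis using assms by (simp add: powr_divide)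
qed

theorem mainTheorem7:
  fixes m :: "'a::metric_space measure" and D :: real and x0 :: 'a
  assumes "space m = UNIV" and "sets m = sets borel"
    and "D > 0" and "ahlfors_regular m D"
  shows "\<forall>a::real. 0 < a \<and> a \<le> 1 \<longrightarrow>
    (\<exists>C::real. 0 < C \<and>
      (\<forall>t::real. \<forall>g::'a \<Rightarrow> real.
         0 < t \<and> t \<le> 1/2 \<and> loc_integrable m g \<and> (\<forall>x. 0 \<le> g x) \<longrightarrow>
         (\<exists>S::'a set. finite S \<and>
            (\<forall>j\<in>S. t * (1 + dist x0 j) \<le> 1) \<and>
            (\<forall>x. (\<Sum>j\<in>S. indicator (ball j (t * (1 + dist x0 j))) x) \<le> C) \<and>
            (\<forall>x. t * (1 + dist x0 x) \<le> 1/2 \<longrightarrow>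
                 (\<Sum>j\<in>S. indicator (ball j (a * t * (1 + dist x0 j))) x) \<ge> (1::real)) \<and>
            (\<forall>j\<in>S. g j \<le> C * (1 / measure m (ball j (t * (1 + dist x0 j)))) *
                 (LINT y:ball j (t * (1 + dist x0 j))|m. g y)))))"
proof (intro allI impI)
  fix a :: real assume a: "0 < a \<and> a \<le> 1"
  obtain A where A1: "A \<ge> 1"
    and fin: "\<And>x r. r \<ge> 0 \<Longrightarrow> emeasure m (ball x r) \<noteq> \<infinity>"
    and lo: "\<And>x r. r \<ge> 0 \<Longrightarrow> (1/A) * r powr D \<le> measure m (ball x r)"
    and up: "\<And>x r. r \<ge> 0 \<Longrightarrow> measure m (ball x r) \<le> A * r powr D"
    using AR_obtain[OF assms(4)] by metis
  have sets: "sets m = sets borel" by (rule assms(2))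
  have bs: "ball x s \<in> sets m" for x s using sets by simp
  have mpos: "measure m (ball x r) > 0" if "r > 0" for x r
  proof -
    have "(1/A) * r powr D > 0" using A1 that by simp
    then show ?thesis using lo[of r x] that by linarith
  qed
  define C where "C = A * A * (112 / a) powr D"
  define \<delta> where "\<delta> = a / 4"
  have \<delta>: "0 < \<delta>" "\<delta> \<le> 1/4" using a by (auto simp: \<delta>_def)
  show "\<exists>C::real. 0 < C \<and>
      (\<forall>t::real. \<forall>g::'a \<Rightarrow> real.
         0 < t \<and> t \<le> 1/2 \<and> loc_integrable m g \<and> (\<forall>x. 0 \<le> g x) \<longrightarrow>
         (\<exists>S::'a set. finite S \<and>
            (\<forall>j\<in>S. t * (1 + dist x0 j) \<le> 1) \<and>
            (\<forall>x. (\<Sum>j\<in>S. indicator (ball j (t * (1 + dist x0 j))) x) \<le> C) \<and>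
            (\<forall>x. t * (1 + dist x0 x) \<le> 1/2 \<longrightarrow>
                 (\<Sum>j\<in>S. indicator (ball j (a * t * (1 + dist x0 j))) x) \<ge> (1::real)) \<and>
            (\<forall>j\<in>S. g j \<le> C * (1 / measure m (ball j (t * (1 + dist x0 j)))) *
                 (LINT y:ball j (t * (1 + dist x0 j))|m. g y))))"
  proof (intro exI[of _ C] conjI allI impI)
    show "0 < C" using A1 a by (simp add: C_def)
    fix t :: real and g :: "'a \<Rightarrow> real"
    assume H: "0 < t \<and> t \<le> 1/2 \<and> loc_integrable m g \<and> (\<forall>x. 0 \<le> g x)"
    have t: "0 < t" "t \<le> 1/2" using H by auto
    have g0: "\<And>x. 0 \<le> g x" using H by auto
    have gi: "\<And>x r. set_integrable m (ball x r) g" using H by (auto simp: loc_integrable_def)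
    define d where "d x = 1 + dist x0 x" for x
    have d1: "d x \<ge> 1" for x by (simp add: d_def)
    have dl1: "d y \<le> d x + dist x y" for x y
      unfolding d_def using dist_triangle[of x0 y x] by linarith
    have dl2: "d x \<le> d y + dist x y" for x y
      unfolding d_def using dist_triangle[of x0 x y] dist_commute[of x y] by linarith
    have \<delta>t: "\<delta> * t \<le> 1/8" "0 < \<delta> * t" using \<delta> t mult_mono[of \<delta> "1/4" t "1/2"] by auto
    have e_le: "\<delta> * t * d z \<le> (1/4) * (t * d z)" for z
    proof -
      have "\<delta> * (t * d z) \<le> (1/4) * (t * d z)"
        using \<delta> t d1[of z] by (intro mult_right_mono) auto
      then show ?thesis by (simp add: mult.assoc)
    qed
    have e_pos: "0 < \<delta> * t * d z" for z using \<delta>t d1[of z] by simp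
    have td_le: "t * d z \<le> (1/2) * d z" for z using t d1[of z] by (intro mult_right_mono) auto
    define R where "R = {x. t * d x \<le> 1/2}"
    define sep where "sep P \<longleftrightarrow> (\<forall>y\<in>P. \<forall>z\<in>P. y \<noteq> z \<longrightarrow> \<delta> * t * min (d y) (d z) \<le> dist y z)" for P
    define F where "F = {P. P \<subseteq> R \<and> finite P \<and> sep P}"
    define N where "N = A * A * ((1 / (2*t) + \<delta>*t/2) / (\<delta>*t/2)) powr D"
    have cardF: "real (card P) \<le> N" if PF: "P \<in> F" for P
    proof -
      have PR: "P \<subseteq> R" and Pfin: "finite P" and Psep: "sep P" using PF by (auto simp: F_def)
      have r: "\<delta> * t / 2 > 0" using \<delta>t by simp
      have R': "1 / (2*t) + \<delta>*t/2 \<ge> 0" using t \<delta>t by simp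
      have "real (card P) * ((1/A) * (\<delta> * t / 2) powr D) \<le> A * (1 / (2*t) + \<delta>*t/2) powr D"
      proof (rule packing[OF sets A1 fin lo up Pfin r R'])
        fix q assume "q \<in> P"
        then have "t * d q \<le> 1/2" using PR by (auto simp: R_def)
        then have "d q \<le> 1 / (2*t)" using t by (simp add: field_simps)
        then have dq: "dist x0 q < 1 / (2*t)" by (simp add: d_def)
        show "ball q (\<delta> * t / 2) \<subseteq> ball x0 (1 / (2*t) + \<delta>*t/2)"
        proof
          fix y assume "y \<in> ball q (\<delta> * t / 2)"
          then have "dist q y < \<delta> * t / 2" by simp
          then show "y \<in> ball x0 (1 / (2*t) + \<delta>*t/2)"
            using dq dist_triangle[of x0 y q] by simp
        qed
      next
        fix q q' assume "q \<in> P" "q' \<in> P" "q \<noteq> q'"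
        then have "\<delta> * t * min (d q) (d q') \<le> dist q q'" using Psep by (auto simp: sep_def)
        moreover have "\<delta> * t * 1 \<le> \<delta> * t * min (d q) (d q')"
          using \<delta>t d1[of q] d1[of q'] by (intro mult_left_mono) auto
        ultimately show "2 * (\<delta> * t / 2) \<le> dist q q'" by simp
      qed
      then show ?thesis unfolding N_def using A1 r R' by (intro card_bound) auto
    qed
    obtain S0 where S0F: "S0 \<in> F" and maxc: "\<And>P. P \<in> F \<Longrightarrow> card P \<le> card S0"
    proof -
      have "card ` F \<subseteq> {..nat \<lceil>N\<rceil>}"
      proof
        fix k assume "k \<in> card ` F"
        then obtain P where "P \<in> F" "k = card P" by auto
        then have "real k \<le> N" using cardF by simp
        then have "int k \<le> \<lceil>N\<rceil>" by linarith
        then show "k \<in> {..nat \<lceil>N\<rceil>}" by simp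
      qed
      then have finF: "finite (card ` F)" by (rule finite_subset) simp
      have "{} \<in> F" by (simp add: F_def sep_def)
      then have ne: "card ` F \<noteq> {}" by blast
      have "Max (card ` F) \<in> card ` F" using Max_in[OF finF ne] .
      then obtain S0 where "S0 \<in> F" "card S0 = Max (card ` F)" by auto
      moreover have "card P \<le> Max (card ` F)" if "P \<in> F" for P using Max_ge[OF finF] that by blast
      ultimately show ?thesis using that by metis
    qed
    have S0R: "S0 \<subseteq> R" and S0fin: "finite S0" and S0sep: "sep S0" using S0F by (auto simp: F_def)
    have minle1: "\<delta> * t * min u v \<le> \<delta> * t * u" for u v
      using \<delta>t by (intro mult_left_mono) auto
    have minle2: "\<delta> * t * min u v \<le> \<delta> * t * v" for u v
      using \<delta>t by (intro mult_left_mono) auto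
    have cover: "\<exists>z\<in>S0. dist x z < \<delta> * t * d z" if xR: "x \<in> R" for x
    proof (cases "x \<in> S0")
      case True
      then show ?thesis using e_pos[of x] by (intro bexI[of _ x]) auto
    next
      case False
      have "insert x S0 \<notin> F"
      proof
        assume "insert x S0 \<in> F"
        then have "card (insert x S0) \<le> card S0" by (rule maxc)
        then show False using False S0fin by simp
      qed
      then have "\<not> sep (insert x S0)" using xR S0R S0fin by (auto simp: F_def)
      then obtain y w where yw: "y \<in> insert x S0" "w \<in> insert x S0" "y \<noteq> w"
        "dist y w < \<delta> * t * min (d y) (d w)"
        unfolding sep_def by (auto simp: not_le)
      show ?thesis
      proof (cases "y = x")
        case True
        then have "w \<in> S0" using yw by auto
        then show ?thesis using yw True minle2[of "d y" "d w"] by (intro bexI[of _ w]) auto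
      next
        case False
        then have yS: "y \<in> S0" using yw by auto
        show ?thesis
        proof (cases "w = x")
          case True
          then show ?thesis using yS yw minle1[of "d y" "d w"]
            by (intro bexI[of _ y]) (auto simp: dist_commute)
        next
          case False
          then have "w \<in> S0" using yw by auto
          then show ?thesis using yS yw S0sep unfolding sep_def by force
        qed
      qed
    qed
    have "\<exists>y. dist z y < \<delta> * t * d z \<and>
        g y * measure m (ball z (\<delta> * t * d z)) \<le> (LINT y:ball z (\<delta> * t * d z)|m. g y)" for z
    proof -
      have "\<exists>y\<in>ball z (\<delta> * t * d z). g y * measure m (ball z (\<delta> * t * d z)) \<le> (LINT y:ball z (\<delta> * t * d z)|m. g y)"
        using e_pos[of z] by (intro below_avg gi bs fin mpos) auto
      then show ?thesis by auto
    qed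
    then obtain p where p: "\<And>z. dist z (p z) < \<delta> * t * d z"
      "\<And>z. g (p z) * measure m (ball z (\<delta> * t * d z)) \<le> (LINT y:ball z (\<delta> * t * d z)|m. g y)"
      by metis
    have pup: "d (p z) \<le> d z + \<delta> * t * d z" for z using dl1[of "p z" z] p(1)[of z] by linarith
    have plo: "d z - \<delta> * t * d z \<le> d (p z)" for z using dl2[of z "p z"] p(1)[of z] by linarith
    have pup2: "d (p z) \<le> (9/8) * d z" for z using pup[of z] e_le[of z] td_le[of z] by linarith
    have plo2: "(7/8) * d z \<le> d (p z)" for z using plo[of z] e_le[of z] td_le[of z] by linarith
    have tpup: "t * d (p z) \<le> (9/8) * (t * d z)" for z
      using mult_left_mono[OF pup2[of z], of t] t by simp
    have tplo: "(7/8) * (t * d z) \<le> t * d (p z)" for z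
      using mult_left_mono[OF plo2[of z], of t] t by simp
    define S where "S = p ` S0"
    show "\<exists>S::'a set. finite S \<and>
            (\<forall>j\<in>S. t * (1 + dist x0 j) \<le> 1) \<and>
            (\<forall>x. (\<Sum>j\<in>S. indicator (ball j (t * (1 + dist x0 j))) x) \<le> C) \<and>
            (\<forall>x. t * (1 + dist x0 x) \<le> 1/2 \<longrightarrow>
                 (\<Sum>j\<in>S. indicator (ball j (a * t * (1 + dist x0 j))) x) \<ge> (1::real)) \<and>
            (\<forall>j\<in>S. g j \<le> C * (1 / measure m (ball j (t * (1 + dist x0 j)))) *
                 (LINT y:ball j (t * (1 + dist x0 j))|m. g y))"
      unfolding d_def[symmetric]
    proof (intro exI[of _ S] conjI ballI allI impI)
      show "finite S" using S0fin by (simp add: S_def)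
      fix j assume "j \<in> S"
      then obtain z where z: "z \<in> S0" "j = p z" by (auto simp: S_def)
      show "t * d j \<le> 1"
        using tpup[of z] z S0R by (auto simp: R_def)
    next
      fix x
      have tdx: "t * d x > 0" using t d1[of x] by (simp add: mult_pos_pos)
      define T where "T = {z\<in>S0. dist (p z) x < t * d (p z)}"
      have Tfin: "finite T" using S0fin by (simp add: T_def)
      have "(\<Sum>j\<in>S. indicator (ball j (t * d j)) x) \<le> (\<Sum>z\<in>S0. indicator (ball (p z) (t * d (p z))) x :: real)"
        unfolding S_def using sum_image_le[OF S0fin, of "\<lambda>j. indicator (ball j (t*d j)) x :: real" p]
        by (simp add: o_def)
      also have "\<dots> = (\<Sum>z\<in>S0. if dist (p z) x < t * d (p z) then 1 else 0)"
        by (intro sum.cong) (auto simp: indicator_def)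
      also have "\<dots> = real (card T)"
        unfolding T_def using sum.inter_filter[OF S0fin, of "\<lambda>_. 1::real" "\<lambda>z. dist (p z) x < t * d (p z)"]
        by simp
      also have "\<dots> \<le> C"
      proof -
        define r where "r = \<delta> * t * d x / 4"
        have r: "r > 0" using e_pos[of x] by (simp add: r_def)
        have R': "7 * (t * d x) \<ge> 0" using tdx by simp
        have Tf: "dist z x < (22/5) * (t * d x) \<and> d x / 2 \<le> d z" if zT: "z \<in> T" for z
        proof -
          have h0: "dist (p z) x < t * d (p z)" using zT by (simp add: T_def)
          have h1: "dist z (p z) < (1/4) * (t * d z)" using p(1)[of z] e_le[of z] by linarith
          have h2: "dist z x < (11/8) * (t * d z)"
            using dist_triangle[of z x "p z"] h0 h1 tpup[of z] by linarith
          have h3: "d z \<le> (16/5) * d x" using dl2[of z x] h2 td_le[of z] by linarith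
          have h4: "d x / 2 \<le> d z" using dl1[of x z] h2 td_le[of z] d1[of x] by linarith
          have h5: "t * d z \<le> (16/5) * (t * d x)" using mult_left_mono[OF h3, of t] t by simp
          show ?thesis using h2 h5 h4 by linarith
        qed
        have "real (card T) * ((1/A) * r powr D) \<le> A * (7 * (t * d x)) powr D"
        proof (rule packing[OF sets A1 fin lo up Tfin r R'])
          fix z assume zT: "z \<in> T"
          show "ball z r \<subseteq> ball x (7 * (t * d x))"
          proof
            fix y assume "y \<in> ball z r"
            then have "dist z y < r" by simp
            moreover have "r \<le> (1/16) * (t * d x)" using e_le[of x] by (simp add: r_def)
            ultimately have "dist x y < 7 * (t * d x)"
              using Tf[OF zT, THEN conjunct1] dist_triangle[of x y z] dist_commute[of z x] tdx r by linarith
            then show "y \<in> ball x (7 * (t * d x))" by simp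
          qed
        next
          fix z z' assume zz: "z \<in> T" "z' \<in> T" "z \<noteq> z'"
          then have "\<delta> * t * min (d z) (d z') \<le> dist z z'" using S0sep by (auto simp: sep_def T_def)
          moreover have "\<delta> * t * (d x / 2) \<le> \<delta> * t * min (d z) (d z')"
            using \<delta>t Tf[OF zz(1)] Tf[OF zz(2)] by (intro mult_left_mono) auto
          ultimately show "2 * r \<le> dist z z'" by (simp add: r_def)
        qed
        then have "real (card T) \<le> A * A * (7 * (t * d x) / r) powr D"
          using A1 r R' by (intro card_bound) auto
        also have "7 * (t * d x) / r = 112 / a"
          using t d1[of x] a by (simp add: r_def \<delta>_def field_simps)
        finally show ?thesis by (simp add: C_def)
      qed
      finally show "(\<Sum>j\<in>S. indicator (ball j (t * d j)) x) \<le> C" .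
    next
      fix x assume "t * d x \<le> 1/2"
      then have "x \<in> R" by (simp add: R_def)
      then obtain z where z: "z \<in> S0" "dist x z < \<delta> * t * d z" using cover by blast
      have tdz: "t * d z > 0" using t d1[of z] by (simp add: mult_pos_pos)
      have "dist (p z) x < 2 * (\<delta> * t * d z)"
        using dist_triangle[of "p z" x z] p(1)[of z] z(2) by (simp add: dist_commute)
      also have "2 * (\<delta> * t * d z) = a * ((1/2) * (t * d z))" by (simp add: \<delta>_def)
      also have "\<dots> \<le> a * ((7/8) * (t * d z))" using a tdz by (intro mult_left_mono) auto
      also have "\<dots> \<le> a * (t * d (p z))" using a tplo[of z] by (intro mult_left_mono) auto
      also have "\<dots> = a * t * d (p z)" by (simp add: mult.assoc)
      finally have xin: "indicator (ball (p z) (a * t * d (p z))) x = (1::real)" by simp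
      have "indicator (ball (p z) (a * t * d (p z))) x \<le> (\<Sum>j\<in>S. indicator (ball j (a * t * d j)) x :: real)"
        using z(1) S0fin by (intro member_le_sum) (auto simp: S_def)
      then show "1 \<le> (\<Sum>j\<in>S. indicator (ball j (a * t * d j)) x :: real)" using xin by simp
    next
      fix j assume "j \<in> S"
      then obtain z where z: "z \<in> S0" "j = p z" by (auto simp: S_def)
      define e where "e = \<delta> * t * d z"
      have epos: "e > 0" using e_pos by (simp add: e_def)
      have tdz: "t * d z > 0" using t d1[of z] by (simp add: mult_pos_pos)
      have sub: "ball z e \<subseteq> ball j (t * d j)"
      proof
        fix y assume "y \<in> ball z e"
        then have "dist z y < e" by simp
        moreover have "dist j z < e" using p(1)[of z] z by (simp add: e_def dist_commute)
        ultimately have "dist j y < 2 * e" using dist_triangle[of j y z] by linarith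
        moreover have "2 * e \<le> t * d j" using e_le[of z] tplo[of z] tdz unfolding e_def z(2) by linarith
        ultimately show "y \<in> ball j (t * d j)" by simp
      qed
      have tdj: "t * d j > 0" using tdz tplo[of z] unfolding z(2) by linarith
      have Imono: "(LINT y:ball z e|m. g y) \<le> (LINT y:ball j (t * d j)|m. g y)"
        by (rule set_int_mono_set[OF gi gi sub g0])
      define Ij where "Ij = (LINT y:ball j (t * d j)|m. g y)"
      have Ij0: "Ij \<ge> 0" unfolding Ij_def set_lebesgue_integral_def
        using g0 by (intro integral_nonneg_AE) (auto simp: indicator_def)
      define mz where "mz = measure m (ball z e)"
      define mj where "mj = measure m (ball j (t * d j))"
      have mzpos: "mz > 0" using mpos epos by (simp add: mz_def)
      have mjpos: "mj > 0" unfolding mj_def using tdj by (intro mpos)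
      have g1: "g j * mz \<le> Ij" using p(2)[of z] Imono z by (simp add: e_def mz_def Ij_def)
      have mj_le: "mj \<le> A * ((9/8) * (t * d z)) powr D"
      proof -
        have "mj \<le> A * (t * d j) powr D" unfolding mj_def using tdj by (intro up) linarith
        also have "\<dots> \<le> A * ((9/8) * (t * d z)) powr D"
          using A1 tpup[of z] tdj assms(3) unfolding z(2)
          by (intro mult_left_mono powr_mono2) auto
        finally show ?thesis .
      qed
      have mz_ge: "A * (28 * (t * d z)) powr D \<le> C * mz"
      proof -
        have "(1/A) * e powr D \<le> mz" unfolding mz_def using epos by (intro lo) auto
        then have "C * ((1/A) * e powr D) \<le> C * mz"
          using \<open>0 < C\<close> by (intro mult_left_mono) auto
        moreover have "C * ((1/A) * e powr D) = A * ((112 / a) * e) powr D"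
          using A1 a epos powr_mult[of "112/a" e D] by (simp add: C_def)
        moreover have "(112 / a) * e = 28 * (t * d z)"
          using a by (simp add: e_def \<delta>_def field_simps)
        ultimately show ?thesis by simp
      qed
      have "mj \<le> C * mz"
      proof -
        have "((9/8) * (t * d z)) powr D \<le> (28 * (t * d z)) powr D"
          using tdz assms(3) by (intro powr_mono2) auto
        then show ?thesis using mj_le mz_ge A1 by (smt (verit) mult_left_mono)
      qed
      have "g j \<le> Ij / mz" using g1 mzpos by (simp add: pos_le_divide_eq)
      also have "\<dots> \<le> C * (1 / mj) * Ij"
      proof -
        have "Ij * mj \<le> Ij * (C * mz)" using mult_left_mono[OF \<open>mj \<le> C * mz\<close> Ij0] .
        then show ?thesis using mzpos mjpos by (simp add: field_simps)
      qed
      finally show "g j \<le> C * (1 / measure m (ball j (t * d j))) * (LINT y:ball j (t * d j)|m. g y)"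
        by (simp add: mj_def Ij_def)
    qed
  qed
qed

end
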